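(* Assume the standing setting below and run the DMFW algorithm with $\gamma_k=\frac{2}{k+1}$ and $\eta_k=\frac{2}{k+2}$. Then for every $i\in\mathcal N$ and $k\ge1$, $$\mathbb E\|y_k^i\|^2\le\hat\psi.$$
   Context: Setting. There are $n$ agents $\mathcal N=\{1,\dots,n\}$ connected by a connected graph $\mathcal G=(\mathcal N,\mathcal E)$ with weight matrix $C=[c_{ij}]\in\mathbb R^{n\times n}$, where $c_{ij}\ge 0$ and $c_{ij}=0$ whenever $j\ne i$ and $(i,j)\notin\mathcal E$. $C$ is doubly stochastic, i.e. all row sums and all column sums equal $1$. Let $\lambda$ be the second largest eigenvalue of $C$ in magnitude. It is assumed that $|\lambda|<1$ and that for all vectors $x^1,\dots,x^n\in\mathbb R^p$, with $\bar x=\frac1n\sum_i x^i$ and $\hat x^i=\sum_j c_{ij}x^j$, one has $\big(\sum_i\|\hat x^i-\bar x\|^2\big)^{1/2}\le|\lambda|\big(\sum_i\|x^i-\bar x\|^2\big)^{1/2}$. Let $k_0$ be the smallest positive integer with $|\lambda|\le (k_0/(k_0+1))^2$. Problem data. $\mathcal X\subset\mathbb R^p$ is convex and compact with diameter $D$, i.e. $\|x-x'\|\le D$ for all $x,x'\in\mathcal X$. For each $i$, $\xi^i$ is a random variable. The function $f_i(\cdot,\xi)$ is differentiable with $L$-Lipschitz gradient for every $\xi$. $F_i(x)=\mathbb E[f_i(x,\xi^i)]$ is differentiable with $\nabla F_i(x)=\mathbb E[\nabla f_i(x,\xi^i)]$ and $L$-Lipschitz gradient. For all $x\in\mathcal X$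 and $i$, $\mathbb E\|\nabla F_i(x)-\nabla f_i(x,\xi^i)\|^2\le\delta^2$. Set $F=\frac1n\sum_{i=1}^nF_i$. $G>0$ is a constant with $\mathbb E\|\nabla f_i(x,\xi^i)\|^2\le G^2$ and $\mathbb E\|\nabla f_i(x,\xi^i)\|\le G$ for all $x\in\mathcal X$ and $i\in\mathcal N$. DMFW algorithm. Fix step sizes $\gamma_k,\eta_k\in(0,1]$ and deterministic initial points $x_1^i\in\mathcal X$. The samples $\xi_k^i$ ($k\ge1$, $i\in\mathcal N$) are mutually independent, and $\xi_k^i$ has the distribution of $\xi^i$. For $k=1,2,\dots$ and each $i$: - $\hat x_k^i=\sum_{j=1}^n c_{ij}x_k^j$. - For $k=1$: $y_1^i=s_1^i=\nabla f_i(\hat x_1^i,\xi_1^i)$. For $k\ge2$: $y_k^i=(1-\gamma_k)y_{k-1}^i+\nabla f_i(\hat x_k^i,\xi_k^i)-(1-\gamma_k)\nabla f_i(\hat x_{k-1}^i,\xi_k^i)$ and $s_k^i=\sum_j c_{ij}s_{k-1}^j+y_k^i-y_{k-1}^i$. - $p_k^i=\sum_j c_{ij}s_k^j$. - $\theta_k^i\in\arg\min_{\phi\in\mathcal X}\langle p_k^i,\phi\rangle$. - $x_{k+1}^i=\hat x_k^i+\eta_k(\theta_k^i-\hat x_k^i)$. Constants: - $C_1=k_0\sqrt n D$. - $\psi=\max\{\max_i\mathbb E\|y_1^i\|,\ 2G+2L(D+2C_1)\}$. - $\hat\psi=\max\{\max_i\mathbb E\|y_1^i\|^2,\ 4L(D+2C_1)\psi+4G\psi+8G^2+8L^2(D+2C_1)^2\}$.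 *)

theory Defs
  imports "HOL-Analysis.Analysis" "HOL-Probability.Probability"
    "HOL-Computational_Algebra.Polynomial"
begin

definition charpoly_c :: "real^'n^'n \<Rightarrow> complex poly" where
  "charpoly_c A = det (\<chi> i j. (if i = j then [:0, 1:] else 0) - [:complex_of_real (A $ i $ j):])"

definition eig_mags_desc :: "real^'n^'n \<Rightarrow> real list" where
  "eig_mags_desc A = rev (sorted_list_of_multiset (image_mset norm (proots (charpoly_c A))))"

definition second_eig_mag :: "real^'n^'n \<Rightarrow> real" where
  "second_eig_mag A = eig_mags_desc A ! 1"

definition mix :: "real^'n^'n \<Rightarrow> ('n::finite \<Rightarrow> 'a::real_vector) \<Rightarrow> ('n \<Rightarrow> 'a)" where
  "mix C v = (\<lambda>i. \<Sum>j\<in>UNIV. (C $ i $ j) *\<^sub>R v j)"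

text \<open>DMFW iteration (for one fixed outcome of the samples).
  dmfw ... k = (x_k, y_k, s_k, x_{k+1}) for k \<ge> 1; the value at k = 0 is an unused dummy.
  g i x \<xi> is the gradient of f_i(\<cdot>,\<xi>) at x; lmo k i p is the chosen minimiser \<theta>_k^i
  of \<langle>p,\<phi>\<rangle> over \<phi> \<in> X; \<xi> k i is the sample \<xi>_k^i.\<close>
fun dmfw :: "real^'n^'n \<Rightarrow> ('n::finite \<Rightarrow> 'a::euclidean_space \<Rightarrow> 'b \<Rightarrow> 'a)
    \<Rightarrow> (nat \<Rightarrow> 'n \<Rightarrow> 'a \<Rightarrow> 'a) \<Rightarrow> (nat \<Rightarrow> real) \<Rightarrow> (nat \<Rightarrow> real) \<Rightarrow> ('n \<Rightarrow> 'a)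
    \<Rightarrow> (nat \<Rightarrow> 'n \<Rightarrow> 'b) \<Rightarrow> nat \<Rightarrow> ('n \<Rightarrow> 'a) \<times> ('n \<Rightarrow> 'a) \<times> ('n \<Rightarrow> 'a) \<times> ('n \<Rightarrow> 'a)" where
  "dmfw C g lmo \<gamma> \<eta> x1 \<xi> 0 = (x1, (\<lambda>_. 0), (\<lambda>_. 0), x1)"
| "dmfw C g lmo \<gamma> \<eta> x1 \<xi> (Suc 0) =
    (let xh = mix C x1;
         y = (\<lambda>i. g i (xh i) (\<xi> 1 i));
         s = y;
         p = mix C s;
         x' = (\<lambda>i. xh i + \<eta> 1 *\<^sub>R (lmo 1 i (p i) - xh i))
     in (x1, y, s, x'))"
| "dmfw C g lmo \<gamma> \<eta> x1 \<xi> (Suc (Suc k)) =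
    (case dmfw C g lmo \<gamma> \<eta> x1 \<xi> (Suc k) of (xo, yo, so, xk) \<Rightarrow>
      let m = Suc (Suc k);
          xh = mix C xk;
          xho = mix C xo;
          y = (\<lambda>i. (1 - \<gamma> m) *\<^sub>R yo i + g i (xh i) (\<xi> m i) - (1 - \<gamma> m) *\<^sub>R g i (xho i) (\<xi> m i));
          s = (\<lambda>i. mix C so i + y i - yo i);
          p = mix C s;
          x' = (\<lambda>i. xh i + \<eta> m *\<^sub>R (lmo m i (p i) - xh i))
      in (xk, y, s, x'))"

definition dmfw_y where
  "dmfw_y C g lmo \<gamma> \<eta> x1 \<xi> k i = fst (snd (dmfw C g lmo \<gamma> \<eta> x1 \<xi> k)) i"

end

theory Submission imports Defs begin

context fixes C :: "real^'n::finite^'n" and g :: "'n \<Rightarrow> 'a::euclidean_space \<Rightarrow> 'b \<Rightarrow> 'a"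
  and lmo :: "nat \<Rightarrow> 'n \<Rightarrow> 'a \<Rightarrow> 'a" and \<gamma> \<eta> :: "nat \<Rightarrow> real" and x1 :: "'n \<Rightarrow> 'a"
  and \<xi> :: "nat \<Rightarrow> 'n \<Rightarrow> 'b"
begin

abbreviation "dmfwT k \<equiv> dmfw C g lmo \<gamma> \<eta> x1 \<xi> k"

lemma dX1: "fst (dmfwT (Suc 0)) = x1" by (simp add: Let_def)

lemma dXS: "k \<ge> 1 \<Longrightarrow> fst (dmfwT (Suc k)) = snd (snd (snd (dmfwT k)))"
proof -
  assume "k \<ge> 1" then obtain k' where k: "k = Suc k'" by (cases k) auto
  obtain xo yo so xk where e: "dmfwT (Suc k') = (xo,yo,so,xk)" by (cases "dmfwT (Suc k')") auto
  show ?thesis unfolding k using e by (simp add: Let_def)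
qed

lemma dXN: "k \<ge> 1 \<Longrightarrow> \<exists>p. snd (snd (snd (dmfwT k))) = (\<lambda>i. mix C (fst (dmfwT k)) i + \<eta> k *\<^sub>R (lmo k i (p i) - mix C (fst (dmfwT k)) i))"
proof -
  assume "k \<ge> 1" then obtain k' where k: "k = Suc k'" by (cases k) auto
  show ?thesis
  proof (cases k')
    case 0 then show ?thesis unfolding k by (simp add: Let_def) blast
  next
    case (Suc k'')
    obtain xo yo so xk where e: "dmfwT (Suc k'') = (xo,yo,so,xk)" by (cases "dmfwT (Suc k'')") auto
    show ?thesis unfolding k Suc using e by (simp add: Let_def) blast
  qed
qed

lemma dY1: "fst (snd (dmfwT (Suc 0))) = (\<lambda>i. g i (mix C (fst (dmfwT (Suc 0))) i) (\<xi> 1 i))"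
  by (simp add: Let_def)

lemma dYSS: "fst (snd (dmfwT (Suc (Suc k)))) = (\<lambda>i. (1 - \<gamma> (Suc (Suc k))) *\<^sub>R fst (snd (dmfwT (Suc k))) i
   + g i (mix C (fst (dmfwT (Suc (Suc k)))) i) (\<xi> (Suc (Suc k)) i)
   - (1 - \<gamma> (Suc (Suc k))) *\<^sub>R g i (mix C (fst (dmfwT (Suc k))) i) (\<xi> (Suc (Suc k)) i))"
proof -
  obtain xo yo so xk where e: "dmfwT (Suc k) = (xo,yo,so,xk)" by (cases "dmfwT (Suc k)") auto
  show ?thesis using e by (simp add: Let_def)
qed
end

definition avg :: "('n::finite \<Rightarrow> 'a::real_vector) \<Rightarrow> 'a" where
  "avg v = (1 / real CARD('n)) *\<^sub>R (\<Sum>j\<in>UNIV. v j)"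

lemma avg_lin: "avg (\<lambda>i. a *\<^sub>R u i + b *\<^sub>R w i) = a *\<^sub>R avg u + b *\<^sub>R avg w"
  by (simp add: avg_def sum.distrib scaleR_sum_right[symmetric] algebra_simps)

lemma mix_in:
  fixes C :: "real^'n::finite^'n"
  assumes "convex X" "\<forall>i j. C $ i $ j \<ge> 0" "\<forall>i. (\<Sum>j\<in>UNIV. C $ i $ j) = 1" "\<forall>j. v j \<in> X"
  shows "mix C v i \<in> X"
  unfolding mix_def using assms by (intro convex_sum) auto

lemma avg_in:
  fixes v :: "'n::finite \<Rightarrow> 'a::real_vector"
  assumes "convex X" "\<forall>j. v j \<in> X"
  shows "avg v \<in> X"
proof -
  have "avg v = (\<Sum>j\<in>UNIV. (1 / real CARD('n)) *\<^sub>R v j)" by (simp add: avg_def scaleR_sum_right)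
  also have "\<dots> \<in> X" using assms by (intro convex_sum) auto
  finally show ?thesis .
qed

lemma avg_mix:
  fixes C :: "real^'n::finite^'n"
  assumes "\<forall>j. (\<Sum>i\<in>UNIV. C $ i $ j) = 1"
  shows "avg (mix C v) = avg v"
proof -
  have "(\<Sum>i\<in>UNIV. mix C v i) = (\<Sum>j\<in>UNIV. \<Sum>i\<in>UNIV. (C $ i $ j) *\<^sub>R v j)"
    unfolding mix_def by (rule sum.swap)
  also have "\<dots> = (\<Sum>j\<in>UNIV. v j)" using assms by (simp add: scaleR_sum_left[symmetric])
  finally show ?thesis by (simp add: avg_def)
qed

lemma step_L2:
  fixes C :: "real^'n::finite^'n" and v \<theta> :: "'n \<Rightarrow> 'a::real_normed_vector"
  assumes cols: "\<forall>j. (\<Sum>i\<in>UNIV. C $ i $ j) = 1" and convX: "convex X"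
    and th: "\<forall>i. \<theta> i \<in> X" and diam: "\<forall>x\<in>X. \<forall>x'\<in>X. norm (x - x') \<le> D"
    and eta: "0 \<le> \<eta>" "\<eta> \<le> 1"
  defines "w \<equiv> (\<lambda>i. mix C v i + \<eta> *\<^sub>R (\<theta> i - mix C v i))"
  shows "L2_set (\<lambda>i. norm (w i - avg w)) UNIV
     \<le> (1 - \<eta>) * L2_set (\<lambda>i. norm (mix C v i - avg v)) UNIV + \<eta> * (sqrt (real CARD('n)) * D)"
    and "avg w - avg v = \<eta> *\<^sub>R (avg \<theta> - avg v)"
proof -
  have w': "w = (\<lambda>i. (1 - \<eta>) *\<^sub>R mix C v i + \<eta> *\<^sub>R \<theta> i)" unfolding w_def
    by (simp add: algebra_simps)
  have aw: "avg w = (1 - \<eta>) *\<^sub>R avg v + \<eta> *\<^sub>R avg \<theta>"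
    unfolding w' avg_lin avg_mix[OF cols] ..
  show "avg w - avg v = \<eta> *\<^sub>R (avg \<theta> - avg v)" unfolding aw by (simp add: algebra_simps)
  have ath: "avg \<theta> \<in> X" using avg_in[OF convX th] .
  have "L2_set (\<lambda>i. norm (w i - avg w)) UNIV
      \<le> L2_set (\<lambda>i. norm ((1 - \<eta>) *\<^sub>R (mix C v i - avg v)) + norm (\<eta> *\<^sub>R (\<theta> i - avg \<theta>))) UNIV"
  proof (rule L2_set_mono)
    fix i
    have "w i - avg w = (1 - \<eta>) *\<^sub>R (mix C v i - avg v) + \<eta> *\<^sub>R (\<theta> i - avg \<theta>)"
      by (subst aw) (simp add: w' algebra_simps)
    then show "norm (w i - avg w) \<le> norm ((1 - \<eta>) *\<^sub>R (mix C v i - avg v)) + norm (\<eta> *\<^sub>R (\<theta> i - avg \<theta>))"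
      by (metis norm_triangle_ineq)
  qed simp
  also have "\<dots> \<le> L2_set (\<lambda>i. norm ((1 - \<eta>) *\<^sub>R (mix C v i - avg v))) UNIV + L2_set (\<lambda>i. norm (\<eta> *\<^sub>R (\<theta> i - avg \<theta>))) UNIV"
    by (rule L2_set_triangle_ineq)
  also have "L2_set (\<lambda>i. norm ((1 - \<eta>) *\<^sub>R (mix C v i - avg v))) UNIV = (1 - \<eta>) * L2_set (\<lambda>i. norm (mix C v i - avg v)) UNIV"
    using eta by (simp add: L2_set_right_distrib)
  also have "L2_set (\<lambda>i. norm (\<eta> *\<^sub>R (\<theta> i - avg \<theta>))) UNIV \<le> L2_set (\<lambda>i::'n. \<eta> * D) UNIV"
  proof (rule L2_set_mono)
    fix i
    have "norm (\<theta> i - avg \<theta>) \<le> D" using diam th ath by blast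
    then show "norm (\<eta> *\<^sub>R (\<theta> i - avg \<theta>)) \<le> \<eta> * D" using eta by (simp add: mult_left_mono)
  qed simp
  also have "\<dots> = \<eta> * (sqrt (real CARD('n)) * D)"
  proof -
    have "0 \<le> D" using diam th by (metis norm_ge_zero order_trans)
    then show ?thesis using eta by (simp add: L2_set_constant)
  qed
  finally show "L2_set (\<lambda>i. norm (w i - avg w)) UNIV
     \<le> (1 - \<eta>) * L2_set (\<lambda>i. norm (mix C v i - avg v)) UNIV + \<eta> * (sqrt (real CARD('n)) * D)" by simp
qed


lemma consensus:
  fixes C :: "real^'n::finite^'n" and Xs \<theta> :: "nat \<Rightarrow> 'n \<Rightarrow> 'a::real_normed_vector"
  assumes rows: "\<forall>i. (\<Sum>j\<in>UNIV. C $ i $ j) = 1" and cols: "\<forall>j. (\<Sum>i\<in>UNIV. C $ i $ j) = 1"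
    and nonneg: "\<forall>i j. C $ i $ j \<ge> 0" and convX: "convex X"
    and diam: "\<forall>x\<in>X. \<forall>x'\<in>X. norm (x - x') \<le> D"
    and contr: "\<forall>v::'n\<Rightarrow>'a. L2_set (\<lambda>i. norm (mix C v i - avg v)) UNIV \<le> \<rho> * L2_set (\<lambda>i. norm (v i - avg v)) UNIV"
    and rho: "0 \<le> \<rho>" "\<rho> \<le> 1" "\<rho> * (real k0 + 2) \<le> real k0" "1 \<le> k0"
    and X1: "\<forall>i. Xs 1 i \<in> X"
    and step: "\<forall>k\<ge>1. \<forall>i. \<theta> k i \<in> X \<and> Xs (Suc k) i = mix C (Xs k) i + (2/(real k+2)) *\<^sub>R (\<theta> k i - mix C (Xs k) i)"
    and k: "k \<ge> 1"
  shows "(\<forall>i. Xs k i \<in> X) \<and> L2_set (\<lambda>i. norm (mix C (Xs k) i - avg (Xs k))) UNIV \<le> real k0 * (sqrt (real CARD('n)) * D) / real k"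
  using k
proof (induction k rule: nat_induct_at_least)
  have D0: "0 \<le> D" using diam X1 by (metis norm_ge_zero order_trans)
  define Q where "Q = sqrt (real CARD('n)) * D"
  have Q0: "0 \<le> Q" unfolding Q_def using D0 by simp
  {
    case base
    have a: "avg (Xs 1) \<in> X" using avg_in[OF convX] X1 by blast
    have "L2_set (\<lambda>i. norm (mix C (Xs 1) i - avg (Xs 1))) UNIV \<le> \<rho> * L2_set (\<lambda>i. norm (Xs 1 i - avg (Xs 1))) UNIV"
      using contr by blast
    also have "L2_set (\<lambda>i. norm (Xs 1 i - avg (Xs 1))) UNIV \<le> L2_set (\<lambda>i::'n. D) UNIV"
      by (rule L2_set_mono) (use diam X1 a in auto)
    also have "L2_set (\<lambda>i::'n. D) UNIV = Q" unfolding Q_def using D0 by (simp add: L2_set_constant)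
    finally have "L2_set (\<lambda>i. norm (mix C (Xs 1) i - avg (Xs 1))) UNIV \<le> \<rho> * Q"
      using rho by (simp add: mult_left_mono)
    also have "\<rho> * Q \<le> real k0 * Q" using rho Q0 by (intro mult_right_mono) auto
    finally show ?case using X1 Q_def by simp
  next
    case (Suc k)
    define \<eta> where "\<eta> = 2 / (real k + 2)"
    have eta: "0 \<le> \<eta>" "\<eta> \<le> 1" unfolding \<eta>_def by auto
    have th: "\<forall>i. \<theta> k i \<in> X" using step Suc.hyps by blast
    have w: "Xs (Suc k) = (\<lambda>i. mix C (Xs k) i + \<eta> *\<^sub>R (\<theta> k i - mix C (Xs k) i))"
      using step Suc.hyps unfolding \<eta>_def by auto
    have inX: "\<forall>i. Xs (Suc k) i \<in> X"
    proof
      fix i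
      have "mix C (Xs k) i \<in> X" using mix_in[OF convX nonneg rows] Suc.IH by blast
      then have "(1 - \<eta>) *\<^sub>R mix C (Xs k) i + \<eta> *\<^sub>R \<theta> k i \<in> X"
        using th eta convX by (intro convexD) auto
      then show "Xs (Suc k) i \<in> X" unfolding w by (simp add: algebra_simps)
    qed
    have R: "L2_set (\<lambda>i. norm (mix C (Xs k) i - avg (Xs k))) UNIV \<le> real k0 * Q / real k"
      using Suc.IH Q_def by simp
    have "L2_set (\<lambda>i. norm (mix C (Xs (Suc k)) i - avg (Xs (Suc k)))) UNIV
        \<le> \<rho> * L2_set (\<lambda>i. norm (Xs (Suc k) i - avg (Xs (Suc k)))) UNIV" using contr by blast
    also have "L2_set (\<lambda>i. norm (Xs (Suc k) i - avg (Xs (Suc k)))) UNIV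
        \<le> (1 - \<eta>) * L2_set (\<lambda>i. norm (mix C (Xs k) i - avg (Xs k))) UNIV + \<eta> * Q"
      unfolding w Q_def by (rule step_L2(1)[OF cols convX th diam eta])
    also have "\<dots> \<le> (1 - \<eta>) * (real k0 * Q / real k) + \<eta> * Q"
      using R eta by (intro add_right_mono mult_left_mono) auto
    also have "(1 - \<eta>) * (real k0 * Q / real k) + \<eta> * Q = (real k0 + 2) * Q / (real k + 2)"
    proof -
      have e1: "1 - \<eta> = real k / (real k + 2)" unfolding \<eta>_def by (simp add: field_simps)
      have e2: "(1 - \<eta>) * (real k0 * Q / real k) = real k0 * Q / (real k + 2)"
        unfolding e1 using Suc.hyps by (simp add: field_simps)
      show ?thesis unfolding e2 by (simp add: \<eta>_def add_divide_distrib ring_distribs)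
    qed
    finally have "L2_set (\<lambda>i. norm (mix C (Xs (Suc k)) i - avg (Xs (Suc k)))) UNIV
        \<le> \<rho> * ((real k0 + 2) * Q / (real k + 2))" using rho by (simp add: mult_left_mono)
    also have "\<dots> = (\<rho> * (real k0 + 2)) * Q / (real k + 2)" by simp
    also have "\<dots> \<le> real k0 * Q / (real k + 2)"
      using rho Q0 by (intro divide_right_mono mult_right_mono) auto
    also have "\<dots> \<le> real k0 * Q / real (Suc k)"
      using Q0 Suc.hyps by (intro divide_left_mono) auto
    finally show ?case using inX Q_def by simp
  }
qed


fun Aseq :: "(nat \<Rightarrow> real) \<Rightarrow> real \<Rightarrow> nat \<Rightarrow> real" where
  "Aseq a c 0 = 0"
| "Aseq a c (Suc k) = (if k = 0 then a 1 + c else (2/(real k+2)) * (a (Suc k) + c) + (1 - 2/(real k + 2)) * Aseq a c k)"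

lemma arith1:
  fixes k :: nat and L C1 D d :: real
  assumes "k \<ge> 1" "L \<ge> 0" "C1 \<ge> 0" "D \<ge> 0" "d \<le> C1/(real k+1) + 2/(real k+2)*D + C1/real k"
  shows "(1 - 2/(real k+2)) * (L*d) \<le> 2/(real k+2)*(L*(C1+D))"
proof -
  have kp: "real k > 0" using assms by simp
  have "real k * d \<le> real k * (C1/(real k+1) + 2/(real k+2)*D + C1/real k)"
    using assms kp by (intro mult_left_mono) auto
  also have "\<dots> = real k/(real k+1) * C1 + real k/(real k+2) * (2*D) + C1"
    using kp by (simp add: field_simps)
  also have "\<dots> \<le> 1 * C1 + 1 * (2*D) + C1"
    using assms by (intro add_mono mult_right_mono) auto
  finally have kd: "real k * d \<le> 2 * (C1 + D)" by simp
  have "(1 - 2/(real k+2)) * (L*d) = L * (real k * d) / (real k + 2)"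
    by (simp add: field_simps)
  also have "\<dots> \<le> L * (2 * (C1 + D)) / (real k + 2)"
    using kd assms by (intro divide_right_mono mult_left_mono) auto
  also have "\<dots> = 2/(real k+2)*(L*(C1+D))" by simp
  finally show ?thesis .
qed

lemma norm_y_step:
  fixes Yp G1 G0 :: "'a::real_normed_vector"
  assumes "0 \<le> \<gamma>" "\<gamma> \<le> 1"
  shows "norm ((1 - \<gamma>) *\<^sub>R Yp + G1 - (1 - \<gamma>) *\<^sub>R G0) \<le> \<gamma> * norm G1 + (1 - \<gamma>) * (norm Yp + norm (G1 - G0))"
proof -
  have "(1 - \<gamma>) *\<^sub>R Yp + G1 - (1 - \<gamma>) *\<^sub>R G0 = \<gamma> *\<^sub>R G1 + (1 - \<gamma>) *\<^sub>R (Yp + (G1 - G0))"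
    by (simp add: algebra_simps)
  also have "norm \<dots> \<le> norm (\<gamma> *\<^sub>R G1) + norm ((1 - \<gamma>) *\<^sub>R (Yp + (G1 - G0)))" by (rule norm_triangle_ineq)
  also have "\<dots> \<le> \<gamma> * norm G1 + (1 - \<gamma>) * (norm Yp + norm (G1 - G0))"
    using assms by (simp add: mult_left_mono norm_triangle_ineq)
  finally show ?thesis .
qed


lemma ybound:
  fixes C :: "real^'n::finite^'n" and g :: "'n \<Rightarrow> 'a::euclidean_space \<Rightarrow> 'b \<Rightarrow> 'a"
    and lmo :: "nat \<Rightarrow> 'n \<Rightarrow> 'a \<Rightarrow> 'a" and x1 :: "'n \<Rightarrow> 'a" and \<xi> :: "nat \<Rightarrow> 'n \<Rightarrow> 'b"
  assumes rows: "\<forall>i. (\<Sum>j\<in>UNIV. C $ i $ j) = 1" and cols: "\<forall>j. (\<Sum>i\<in>UNIV. C $ i $ j) = 1"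
    and nonneg: "\<forall>i j. C $ i $ j \<ge> 0" and convX: "convex X"
    and diam: "\<forall>x\<in>X. \<forall>x'\<in>X. norm (x - x') \<le> D"
    and contr: "\<forall>v::'n\<Rightarrow>'a. L2_set (\<lambda>i. norm (mix C v i - avg v)) UNIV \<le> \<rho> * L2_set (\<lambda>i. norm (v i - avg v)) UNIV"
    and rho: "0 \<le> \<rho>" "\<rho> \<le> 1" "\<rho> * (real k0 + 2) \<le> real k0" "1 \<le> k0"
    and x1_in: "\<forall>i. x1 i \<in> X"
    and lmo_in: "\<forall>k i p. lmo k i p \<in> X"
    and lip: "\<forall>z\<in>S. \<forall>x x'. norm (g i x z - g i x' z) \<le> L * norm (x - x')"
    and xiS: "\<forall>k\<ge>1. \<xi> k i \<in> S"
    and L0: "0 \<le> L"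
    and C1: "C1 = real k0 * (sqrt (real CARD('n)) * D)"
    and k: "k \<ge> 1"
  shows "norm (fst (snd (dmfw C g lmo (\<lambda>k. 2 / (real k + 1)) (\<lambda>k. 2 / (real k + 2)) x1 \<xi> k)) i)
     \<le> Aseq (\<lambda>k. norm (g i (x1 i) (\<xi> k i))) (L * (2 * D + C1)) k"
proof -
  let ?\<gamma> = "\<lambda>k::nat. 2 / (real k + 1)" and ?\<eta> = "\<lambda>k::nat. 2 / (real k + 2)"
  define Xs where "Xs k = fst (dmfw C g lmo ?\<gamma> ?\<eta> x1 \<xi> k)" for k
  define Y where "Y k = fst (snd (dmfw C g lmo ?\<gamma> ?\<eta> x1 \<xi> k))" for k
  define a where "a k = norm (g i (x1 i) (\<xi> k i))" for k
  define c where "c = L * (2 * D + C1)"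
  have D0: "0 \<le> D" using diam x1_in by (metis norm_ge_zero order_trans)
  have C10: "0 \<le> C1" unfolding C1 using D0 by simp
  have "\<forall>k. \<exists>\<theta>. k \<ge> 1 \<longrightarrow> (\<forall>i. \<theta> i \<in> X \<and> Xs (Suc k) i = mix C (Xs k) i + (2/(real k+2)) *\<^sub>R (\<theta> i - mix C (Xs k) i))"
  proof
    fix k
    show "\<exists>\<theta>. k \<ge> 1 \<longrightarrow> (\<forall>i. \<theta> i \<in> X \<and> Xs (Suc k) i = mix C (Xs k) i + (2/(real k+2)) *\<^sub>R (\<theta> i - mix C (Xs k) i))"
    proof (cases "k \<ge> 1")
      case True
      from dXN[OF True, of C g lmo ?\<gamma> ?\<eta> x1 \<xi>] obtain p where
        p: "snd (snd (snd (dmfw C g lmo ?\<gamma> ?\<eta> x1 \<xi> k))) = (\<lambda>i. mix C (Xs k) i + ?\<eta> k *\<^sub>R (lmo k i (p i) - mix C (Xs k) i))"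
        unfolding Xs_def by blast
      show ?thesis
        by (rule exI[of _ "\<lambda>i. lmo k i (p i)"])
           (use lmo_in p dXS[OF True, of C g lmo ?\<gamma> ?\<eta> x1 \<xi>] in \<open>simp add: Xs_def\<close>)
    qed simp
  qed
  then obtain \<theta> where th: "\<forall>k\<ge>1. \<forall>i. \<theta> k i \<in> X \<and> Xs (Suc k) i = mix C (Xs k) i + (2/(real k+2)) *\<^sub>R (\<theta> k i - mix C (Xs k) i)"
    by metis
  have X1: "\<forall>i. Xs 1 i \<in> X" using x1_in by (simp add: Xs_def Let_def)
  note cons = consensus[OF rows cols nonneg convX diam contr rho X1 th]
  have inX: "Xs k i \<in> X" if "k \<ge> 1" for k i using cons[OF that] by blast
  have mixX: "mix C (Xs k) i \<in> X" if "k \<ge> 1" for k i using mix_in[OF convX nonneg rows] inX[OF that] by blast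
  have dev: "norm (mix C (Xs k) i - avg (Xs k)) \<le> C1 / real k" if "k \<ge> 1" for k
  proof -
    have "norm (mix C (Xs k) i - avg (Xs k)) \<le> L2_set (\<lambda>i. norm (mix C (Xs k) i - avg (Xs k))) UNIV"
      by (rule member_le_L2_set) auto
    also have "\<dots> \<le> C1 / real k" using cons[OF that] C1 by simp
    finally show ?thesis .
  qed
  have avgstep: "norm (avg (Xs (Suc k)) - avg (Xs k)) \<le> 2/(real k+2) * D" if "k \<ge> 1" for k
  proof -
    have w: "Xs (Suc k) = (\<lambda>i. mix C (Xs k) i + (2/(real k+2)) *\<^sub>R (\<theta> k i - mix C (Xs k) i))"
      using th that by auto
    have thX: "\<forall>i. \<theta> k i \<in> X" using th that by blast
    have "avg (Xs (Suc k)) - avg (Xs k) = (2/(real k+2)) *\<^sub>R (avg (\<theta> k) - avg (Xs k))"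
      unfolding w by (rule step_L2(2)[OF cols convX thX diam]) auto
    moreover have "norm (avg (\<theta> k) - avg (Xs k)) \<le> D"
      using diam avg_in[OF convX thX] avg_in[OF convX, of "Xs k"] inX[OF that] by blast
    ultimately show ?thesis by (simp add: divide_right_mono)
  qed
  have gbound: "norm (g i (mix C (Xs k) i) (\<xi> k i)) \<le> a k + L * D" if "k \<ge> 1" for k
  proof -
    have "norm (g i (mix C (Xs k) i) (\<xi> k i) - g i (x1 i) (\<xi> k i)) \<le> L * norm (mix C (Xs k) i - x1 i)"
      using lip xiS that by blast
    also have "\<dots> \<le> L * D" using diam mixX[OF that] x1_in L0 by (simp add: mult_left_mono)
    finally show ?thesis unfolding a_def by (metis add.commute norm_triangle_sub order_trans add_left_mono)
  qed
  show ?thesis using k unfolding Y_def[symmetric] a_def[symmetric] c_def[symmetric]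
  proof (induction k rule: nat_induct_at_least)
    case base
    have "Y 1 i = g i (mix C (Xs 1) i) (\<xi> 1 i)" unfolding Y_def Xs_def by (simp add: Let_def)
    then have "norm (Y 1 i) \<le> a 1 + L * D" using gbound[of 1] by simp
    also have "\<dots> \<le> a 1 + c" unfolding c_def using L0 D0 C10 by (intro add_left_mono mult_left_mono) auto
    finally show ?case by simp
  next
    case (Suc k)
    obtain k' where k': "k = Suc k'" using Suc.hyps by (cases k) auto
    define \<gamma> where "\<gamma> = 2 / (real k + 2)"
    have g01: "0 \<le> \<gamma>" "\<gamma> \<le> 1" unfolding \<gamma>_def by auto
    have XSS: "Xs (Suc k) = fst (dmfw C g lmo ?\<gamma> ?\<eta> x1 \<xi> (Suc (Suc k')))" unfolding Xs_def k' ..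
    have Yeq: "Y (Suc k) i = (1 - \<gamma>) *\<^sub>R Y k i + g i (mix C (Xs (Suc k)) i) (\<xi> (Suc k) i)
        - (1 - \<gamma>) *\<^sub>R g i (mix C (Xs k) i) (\<xi> (Suc k) i)"
      unfolding Y_def Xs_def k' dYSS \<gamma>_def by (simp add: add.commute)
    have d: "norm (mix C (Xs (Suc k)) i - mix C (Xs k) i) \<le> C1/(real k+1) + 2/(real k+2)*D + C1/real k"
    proof -
      have "mix C (Xs (Suc k)) i - mix C (Xs k) i = (mix C (Xs (Suc k)) i - avg (Xs (Suc k)))
          + (avg (Xs (Suc k)) - avg (Xs k)) - (mix C (Xs k) i - avg (Xs k))" by simp
      also have "norm \<dots> \<le> norm (mix C (Xs (Suc k)) i - avg (Xs (Suc k))) + norm (avg (Xs (Suc k)) - avg (Xs k))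
          + norm (mix C (Xs k) i - avg (Xs k))"
        by (meson norm_triangle_ineq norm_triangle_ineq4 add_right_mono order_trans)
      also have "\<dots> \<le> C1/real (Suc k) + 2/(real k+2)*D + C1/real k"
        using dev[of "Suc k"] dev[of k] avgstep[of k] Suc.hyps by (intro add_mono) auto
      finally show ?thesis by (simp add: add.commute)
    qed
    have lipd: "norm (g i (mix C (Xs (Suc k)) i) (\<xi> (Suc k) i) - g i (mix C (Xs k) i) (\<xi> (Suc k) i))
        \<le> L * (C1/(real k+1) + 2/(real k+2)*D + C1/real k)"
    proof -
      have "norm (g i (mix C (Xs (Suc k)) i) (\<xi> (Suc k) i) - g i (mix C (Xs k) i) (\<xi> (Suc k) i))
        \<le> L * norm (mix C (Xs (Suc k)) i - mix C (Xs k) i)" using lip xiS by simp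
      also have "\<dots> \<le> L * (C1/(real k+1) + 2/(real k+2)*D + C1/real k)" using d L0 by (rule mult_left_mono)
      finally show ?thesis .
    qed
    have "norm (Y (Suc k) i) \<le> \<gamma> * norm (g i (mix C (Xs (Suc k)) i) (\<xi> (Suc k) i))
        + (1 - \<gamma>) * (norm (Y k i) + norm (g i (mix C (Xs (Suc k)) i) (\<xi> (Suc k) i) - g i (mix C (Xs k) i) (\<xi> (Suc k) i)))"
      unfolding Yeq by (rule norm_y_step[OF g01])
    also have "\<dots> \<le> \<gamma> * (a (Suc k) + L * D) + ((1 - \<gamma>) * Aseq a c k + (1 - \<gamma>) * (L * (C1/(real k+1) + 2/(real k+2)*D + C1/real k)))"
      using g01 gbound[of "Suc k"] Suc.IH lipd
      by (simp add: ring_distribs[symmetric] add_mono mult_left_mono)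
    also have "(1 - \<gamma>) * (L * (C1/(real k+1) + 2/(real k+2)*D + C1/real k)) \<le> \<gamma> * (L * (C1 + D))"
      unfolding \<gamma>_def using Suc.hyps L0 C10 D0 by (intro arith1) auto
    also have "\<gamma> * (a (Suc k) + L * D) + ((1 - \<gamma>) * Aseq a c k + \<gamma> * (L * (C1 + D)))
        = \<gamma> * (a (Suc k) + c) + (1 - \<gamma>) * Aseq a c k" unfolding c_def by (simp add: algebra_simps)
    finally show ?case using Suc.hyps unfolding \<gamma>_def by simp
  qed
qed


lemma sq_convex: "0 \<le> (t::real) \<Longrightarrow> t \<le> 1 \<Longrightarrow> (t * x + (1 - t) * y)^2 \<le> t * x^2 + (1 - t) * y^2"
proof -
  assume "0 \<le> t" "t \<le> 1"
  then have "0 \<le> t * (1 - t) * (x - y)^2" by simp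
  then show ?thesis by (simp add: power2_eq_square algebra_simps)
qed

lemma Aseq_exp:
  fixes a :: "nat \<Rightarrow> 'c \<Rightarrow> real"
  assumes "prob_space M"
    and meas: "\<forall>k\<ge>1. a k \<in> borel_measurable M"
    and c0: "0 \<le> c" and a0: "\<forall>k\<ge>1. \<forall>\<omega>. 0 \<le> a k \<omega>"
    and K0: "0 \<le> K"
    and bnd: "\<forall>k\<ge>1. (\<integral>\<^sup>+\<omega>. ennreal ((a k \<omega> + c)^2) \<partial>M) \<le> ennreal K"
    and k: "k \<ge> 1"
  shows "(\<lambda>\<omega>. Aseq (\<lambda>k. a k \<omega>) c k) \<in> borel_measurable M
    \<and> (\<forall>\<omega>. 0 \<le> Aseq (\<lambda>k. a k \<omega>) c k)
    \<and> (\<integral>\<^sup>+\<omega>. ennreal ((Aseq (\<lambda>k. a k \<omega>) c k)^2) \<partial>M) \<le> ennreal K"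
  using k
proof (induction k rule: nat_induct_at_least)
  case base
  have "(\<lambda>\<omega>. a 1 \<omega> + c) \<in> borel_measurable M" using meas by auto
  then show ?case using bnd a0 c0 by simp
next
  case (Suc k)
  define \<gamma> where "\<gamma> = 2 / (real k + 2)"
  have g: "0 \<le> \<gamma>" "\<gamma> \<le> 1" unfolding \<gamma>_def by auto
  have kne: "k \<noteq> 0" using Suc.hyps by simp
  let ?A = "\<lambda>\<omega>. Aseq (\<lambda>k. a k \<omega>) c k"
  have eq: "Aseq (\<lambda>k. a k \<omega>) c (Suc k) = \<gamma> * (a (Suc k) \<omega> + c) + (1 - \<gamma>) * ?A \<omega>" for \<omega>
    using kne unfolding \<gamma>_def by simp
  have mA: "?A \<in> borel_measurable M" and A0: "\<forall>\<omega>. 0 \<le> ?A \<omega>" and EA: "(\<integral>\<^sup>+\<omega>. ennreal ((?A \<omega>)^2) \<partial>M) \<le> ennreal K"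
    using Suc.IH by auto
  have ma: "a (Suc k) \<in> borel_measurable M" using meas by auto
  have m1: "(\<lambda>\<omega>. \<gamma> * (a (Suc k) \<omega> + c) + (1 - \<gamma>) * ?A \<omega>) \<in> borel_measurable M"
    using ma mA by measurable
  have nn: "0 \<le> \<gamma> * (a (Suc k) \<omega> + c) + (1 - \<gamma>) * ?A \<omega>" for \<omega>
    using g a0 c0 A0 by (intro add_nonneg_nonneg mult_nonneg_nonneg) auto
  have "(\<integral>\<^sup>+\<omega>. ennreal ((Aseq (\<lambda>k. a k \<omega>) c (Suc k))^2) \<partial>M)
      \<le> (\<integral>\<^sup>+\<omega>. ennreal \<gamma> * ennreal ((a (Suc k) \<omega> + c)^2) + ennreal (1 - \<gamma>) * ennreal ((?A \<omega>)^2) \<partial>M)"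
  proof (rule nn_integral_mono)
    fix \<omega>
    have "(Aseq (\<lambda>k. a k \<omega>) c (Suc k))^2 \<le> \<gamma> * (a (Suc k) \<omega> + c)^2 + (1 - \<gamma>) * (?A \<omega>)^2"
      unfolding eq using sq_convex[OF g] .
    then have "ennreal ((Aseq (\<lambda>k. a k \<omega>) c (Suc k))^2) \<le> ennreal (\<gamma> * (a (Suc k) \<omega> + c)^2 + (1 - \<gamma>) * (?A \<omega>)^2)"
      by (rule ennreal_leI)
    also have "\<dots> = ennreal \<gamma> * ennreal ((a (Suc k) \<omega> + c)^2) + ennreal (1 - \<gamma>) * ennreal ((?A \<omega>)^2)"
      using g by (simp add: ennreal_plus ennreal_mult)
    finally show "ennreal ((Aseq (\<lambda>k. a k \<omega>) c (Suc k))^2) \<le> ennreal \<gamma> * ennreal ((a (Suc k) \<omega> + c)^2) + ennreal (1 - \<gamma>) * ennreal ((?A \<omega>)^2)" .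
  qed
  also have "\<dots> = ennreal \<gamma> * (\<integral>\<^sup>+\<omega>. ennreal ((a (Suc k) \<omega> + c)^2) \<partial>M) + ennreal (1 - \<gamma>) * (\<integral>\<^sup>+\<omega>. ennreal ((?A \<omega>)^2) \<partial>M)"
    using ma mA by (simp add: nn_integral_add nn_integral_cmult)
  also have "\<dots> \<le> ennreal \<gamma> * ennreal K + ennreal (1 - \<gamma>) * ennreal K"
    using bnd Suc.hyps EA by (intro add_mono mult_left_mono) auto
  also have "\<dots> = ennreal (\<gamma> * K + (1 - \<gamma>) * K)" using g K0 by (simp add: ennreal_plus ennreal_mult)
  also have "\<dots> = ennreal K" by (simp add: algebra_simps)
  finally have E: "(\<integral>\<^sup>+\<omega>. ennreal ((Aseq (\<lambda>k. a k \<omega>) c (Suc k))^2) \<partial>M) \<le> ennreal K" .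
  show ?case using E m1 nn unfolding eq by simp
qed

theorem lemma9:
  fixes C :: "real^'n::finite^'n"
    and E :: "('n \<times> 'n) set"
    and X :: "'a::euclidean_space set"
    and D L G \<delta> :: real
    and M :: "'c measure"
    and Q :: "'n \<Rightarrow> 'b measure"
    and f :: "'n \<Rightarrow> 'a \<Rightarrow> 'b \<Rightarrow> real"
    and gf :: "'n \<Rightarrow> 'a \<Rightarrow> 'b \<Rightarrow> 'a"
    and xi :: "nat \<Rightarrow> 'n \<Rightarrow> 'c \<Rightarrow> 'b"
    and lmo :: "nat \<Rightarrow> 'n \<Rightarrow> 'a \<Rightarrow> 'a"
    and x1 :: "'n \<Rightarrow> 'a"
  defines "lam \<equiv> second_eig_mag C"
  defines "k0 \<equiv> (LEAST k::nat. 0 < k \<and> lam \<le> (real k / (real k + 1))^2)"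
  defines "C1 \<equiv> real k0 * sqrt (real CARD('n)) * D"
  defines "y \<equiv> (\<lambda>k i \<omega>. dmfw_y C gf lmo (\<lambda>k. 2 / (real k + 1)) (\<lambda>k. 2 / (real k + 2)) x1
                        (\<lambda>k i. xi k i \<omega>) k i)"
  defines "\<psi> \<equiv> max (Max (range (\<lambda>i. \<integral>\<omega>. norm (y 1 i \<omega>) \<partial>M)))
                    (2 * G + 2 * L * (D + 2 * C1))"
  defines "\<psi>h \<equiv> max (Max (range (\<lambda>i. \<integral>\<omega>. (norm (y 1 i \<omega>))^2 \<partial>M)))
                    (4 * L * (D + 2 * C1) * \<psi> + 4 * G * \<psi> + 8 * G^2 + 8 * L^2 * (D + 2 * C1)^2)"
  \<comment> \<open>communication graph and weight matrix\<close>
  assumes connected: "\<forall>i j. (i, j) \<in> (E \<union> E\<inverse>)\<^sup>*"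
    and C_nonneg: "\<forall>i j. C $ i $ j \<ge> 0"
    and C_support: "\<forall>i j. j \<noteq> i \<and> (i, j) \<notin> E \<longrightarrow> C $ i $ j = 0"
    and C_rows: "\<forall>i. (\<Sum>j\<in>UNIV. C $ i $ j) = 1"
    and C_cols: "\<forall>j. (\<Sum>i\<in>UNIV. C $ i $ j) = 1"
    and lam_lt1: "lam < 1"
    and contraction: "\<forall>v :: 'n \<Rightarrow> 'a.
          sqrt (\<Sum>i\<in>UNIV. (norm ((\<Sum>j\<in>UNIV. (C $ i $ j) *\<^sub>R v j)
                                   - (1 / real CARD('n)) *\<^sub>R (\<Sum>j\<in>UNIV. v j)))^2)
          \<le> lam * sqrt (\<Sum>i\<in>UNIV. (norm (v i - (1 / real CARD('n)) *\<^sub>R (\<Sum>j\<in>UNIV. v j)))^2)"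
  \<comment> \<open>constraint set\<close>
    and X_convex: "convex X"
    and X_compact: "compact X"
    and X_diam: "\<forall>x\<in>X. \<forall>x'\<in>X. norm (x - x') \<le> D"
  \<comment> \<open>random variables / sampling: Q i is the law of \<xi>^i\<close>
    and M_prob: "prob_space M"
    and samples_law: "\<forall>k\<ge>1. \<forall>i. distr M (Q i) (xi k i) = Q i"
    and samples_indep: "prob_space.indep_vars M (\<lambda>(k, i). Q i) (\<lambda>(k, i). xi k i) ({1..} \<times> UNIV)"
  \<comment> \<open>smoothness of f_i(\<cdot>,\<xi>)\<close>
    and f_grad: "\<forall>i. \<forall>\<xi>\<in>space (Q i). \<forall>x. ((\<lambda>x. f i x \<xi>) has_derivative (\<lambda>h. gf i x \<xi> \<bullet> h)) (at x)"
    and f_lip: "\<forall>i. \<forall>\<xi>\<in>space (Q i). \<forall>x x'. norm (gf i x \<xi> - gf i x' \<xi>) \<le> L * norm (x - x')"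
    and gf_meas: "\<forall>i x. gf i x \<in> borel_measurable (Q i)"
  \<comment> \<open>F_i = E f_i(\<cdot>,\<xi>^i), with \<nabla>F_i = E \<nabla>f_i L-Lipschitz\<close>
    and F_exists: "\<forall>i x. integrable (Q i) (\<lambda>\<xi>. f i x \<xi>)"
    and F_grad: "\<forall>i x. ((\<lambda>x. \<integral>\<xi>. f i x \<xi> \<partial>Q i) has_derivative
                        (\<lambda>h. (\<integral>\<xi>. gf i x \<xi> \<partial>Q i) \<bullet> h)) (at x)"
    and F_lip: "\<forall>i x x'. norm ((\<integral>\<xi>. gf i x \<xi> \<partial>Q i) - (\<integral>\<xi>. gf i x' \<xi> \<partial>Q i)) \<le> L * norm (x - x')"
  \<comment> \<open>variance and moment bounds\<close>
    and var_bound: "\<forall>x\<in>X. \<forall>i. (\<integral>\<^sup>+\<xi>. ennreal ((norm ((\<integral>\<zeta>. gf i x \<zeta> \<partial>Q i) - gf i x \<xi>))^2) \<partial>Q i)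
                              \<le> ennreal (\<delta>^2)"
    and G_pos: "G > 0"
    and G_sq: "\<forall>x\<in>X. \<forall>i. (\<integral>\<^sup>+\<xi>. ennreal ((norm (gf i x \<xi>))^2) \<partial>Q i) \<le> ennreal (G^2)"
    and G_first: "\<forall>x\<in>X. \<forall>i. (\<integral>\<^sup>+\<xi>. ennreal (norm (gf i x \<xi>)) \<partial>Q i) \<le> ennreal G"
  \<comment> \<open>linear minimisation oracle and initial points\<close>
    and lmo_argmin: "\<forall>k i p. lmo k i p \<in> X \<and> (\<forall>\<phi>\<in>X. p \<bullet> lmo k i p \<le> p \<bullet> \<phi>)"
    and lmo_meas: "\<forall>k i. lmo k i \<in> borel_measurable borel"
    and x1_in: "\<forall>i. x1 i \<in> X"
  shows "\<forall>i. \<forall>k\<ge>1. (\<integral>\<^sup>+\<omega>. ennreal ((norm (y k i \<omega>))^2) \<partial>M) \<le> ennreal \<psi>h"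
proof (intro allI impI)
  fix i k assume k: "(k::nat) \<ge> 1"
  interpret P: prob_space M by (rule M_prob)
  have rv: "xi k i \<in> measurable M (Q i)" if "k \<ge> 1" for k i
  proof -
    have "\<forall>x\<in>{1..} \<times> UNIV. (\<lambda>(k, i). xi k i) x \<in> measurable M ((\<lambda>(k, i). Q i) x)"
      using samples_indep unfolding P.indep_vars_def by blast
    then show ?thesis using that by force
  qed
  have xiS: "xi k i \<omega> \<in> space (Q i)" if "k \<ge> 1" "\<omega> \<in> space M" for k i \<omega>
    using rv[OF that(1)] that(2) by (rule measurable_space)
  have L0: "0 \<le> L"
  proof -
    obtain \<omega> where \<omega>: "\<omega> \<in> space M" using P.not_empty by blast
    obtain b :: 'a where b: "b \<in> Basis" using nonempty_Basis by blast
    have "norm (gf undefined b (xi 1 undefined \<omega>) - gf undefined 0 (xi 1 undefined \<omega>)) \<le> L * norm (b - 0)"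
      using f_lip xiS[OF _ \<omega>, of 1 undefined] by blast
    then show ?thesis using b by (metis norm_Basis diff_zero mult.right_neutral norm_ge_zero order_trans)
  qed
  have D0: "0 \<le> D" using X_diam x1_in by (metis norm_ge_zero order_trans)
  have ex: "\<exists>k::nat. 0 < k \<and> lam \<le> (real k / (real k + 1))^2"
  proof -
    define k where "k = nat \<lceil>2 / (1 - lam)\<rceil> + 1"
    have kp: "0 < k" unfolding k_def by simp
    have "2 / (1 - lam) \<le> real k" unfolding k_def by linarith
    then have "2 / (1 - lam) \<le> real k + 1" by simp
    then have h: "2 / (real k + 1) \<le> 1 - lam" using lam_lt1
      by (simp add: divide_le_eq field_simps)
    have e: "real k / (real k + 1) = 1 - 1 / (real k + 1)" by (simp add: field_simps)
    have "1 - 2 / (real k + 1) \<le> (1 - 1 / (real k + 1))^2"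
      by (simp add: power2_eq_square algebra_simps)
    then have "lam \<le> (real k / (real k + 1))^2" unfolding e using h by linarith
    then show ?thesis using kp by blast
  qed
  have k0: "0 < k0" "lam \<le> (real k0 / (real k0 + 1))^2"
    using LeastI_ex[OF ex] unfolding k0_def by auto
  define \<rho> where "\<rho> = (real k0 / (real k0 + 1))^2"
  have rho0: "0 \<le> \<rho>" unfolding \<rho>_def by simp
  have rho1: "\<rho> \<le> 1" unfolding \<rho>_def by (simp add: power_le_one)
  have rho2: "\<rho> * (real k0 + 2) \<le> real k0"
  proof -
    have a: "real k0 * (real k0 + 2) \<le> (real k0 + 1)^2" by (simp add: power2_eq_square algebra_simps)
    have "\<rho> * (real k0 + 2) = real k0 * (real k0 * (real k0 + 2)) / (real k0 + 1)^2"
      unfolding \<rho>_def by (simp add: power_divide power2_eq_square)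
    also have "\<dots> \<le> real k0 * (real k0 + 1)^2 / (real k0 + 1)^2"
      using a by (intro divide_right_mono mult_left_mono) auto
    also have "\<dots> = real k0" by simp
    finally show ?thesis .
  qed
  have k01: "1 \<le> k0" using k0 by simp
  have contr: "\<forall>v::'n\<Rightarrow>'a. L2_set (\<lambda>i. norm (mix C v i - avg v)) UNIV \<le> \<rho> * L2_set (\<lambda>i. norm (v i - avg v)) UNIV"
  proof
    fix v :: "'n \<Rightarrow> 'a"
    have "L2_set (\<lambda>i. norm (mix C v i - avg v)) UNIV \<le> lam * L2_set (\<lambda>i. norm (v i - avg v)) UNIV"
      using contraction unfolding L2_set_def mix_def avg_def by blast
    also have "\<dots> \<le> \<rho> * L2_set (\<lambda>i. norm (v i - avg v)) UNIV"
      using k0 unfolding \<rho>_def by (intro mult_right_mono) auto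
    finally show "L2_set (\<lambda>i. norm (mix C v i - avg v)) UNIV \<le> \<rho> * L2_set (\<lambda>i. norm (v i - avg v)) UNIV" .
  qed
  define c where "c = L * (2 * D + C1)"
  define a where "a k \<omega> = norm (gf i (x1 i) (xi k i \<omega>))" for k \<omega>
  have C1': "C1 = real k0 * (sqrt (real CARD('n)) * D)" unfolding C1_def by simp
  have lmo_in: "\<forall>k i p. lmo k i p \<in> X" using lmo_argmin by blast
  have lip: "\<forall>z\<in>space (Q i). \<forall>x x'. norm (gf i x z - gf i x' z) \<le> L * norm (x - x')" using f_lip by blast
  have ybd: "norm (y k i \<omega>) \<le> Aseq (\<lambda>k. a k \<omega>) c k" if \<omega>: "\<omega> \<in> space M" for \<omega>
    unfolding y_def dmfw_y_def a_def c_def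
  proof -
    have "\<forall>k\<ge>1. xi k i \<omega> \<in> space (Q i)" using xiS \<omega> by blast
    then show "norm (fst (snd (dmfw C gf lmo (\<lambda>k. 2 / (real k + 1)) (\<lambda>k. 2 / (real k + 2)) x1 (\<lambda>k i. xi k i \<omega>) k)) i)
      \<le> Aseq (\<lambda>k. norm (gf i (x1 i) (xi k i \<omega>))) (L * (2 * D + C1)) k"
      using ybound[where \<xi>="\<lambda>k i. xi k i \<omega>" and g=gf and i=i, OF C_rows C_cols C_nonneg X_convex X_diam contr rho0 rho1 rho2 k01 x1_in lmo_in lip _ L0 C1' k]
      by simp
  qed
  have C10: "0 \<le> C1" unfolding C1_def using D0 by simp
  have c0: "0 \<le> c" unfolding c_def using L0 D0 C10 by simp
  have ma: "a k \<in> borel_measurable M" if "k \<ge> 1" for k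
  proof -
    have "(\<lambda>\<omega>. gf i (x1 i) (xi k i \<omega>)) \<in> borel_measurable M"
      using measurable_compose[OF rv[OF that] gf_meas[rule_format]] by simp
    then show ?thesis unfolding a_def by measurable
  qed
  have Ea2: "(\<integral>\<^sup>+\<omega>. ennreal ((a k \<omega>)^2) \<partial>M) \<le> ennreal (G^2)" if "k \<ge> 1" for k
  proof -
    have m: "(\<lambda>z. ennreal ((norm (gf i (x1 i) z))^2)) \<in> borel_measurable (Q i)"
    proof -
      have gm[measurable]: "gf i (x1 i) \<in> borel_measurable (Q i)" using gf_meas by blast
      show ?thesis by measurable
    qed
    have "(\<integral>\<^sup>+\<omega>. ennreal ((a k \<omega>)^2) \<partial>M) = integral\<^sup>N (distr M (Q i) (xi k i)) (\<lambda>z. ennreal ((norm (gf i (x1 i) z))^2))"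
      unfolding a_def
      by (rule nn_integral_distr[symmetric]) (use rv[OF that] m samples_law that in auto)
    also have "\<dots> = (\<integral>\<^sup>+z. ennreal ((norm (gf i (x1 i) z))^2) \<partial>Q i)" using samples_law that by simp
    also have "\<dots> \<le> ennreal (G^2)" using G_sq x1_in by blast
    finally show ?thesis .
  qed
  define K where "K = 2 * G^2 + 2 * c^2"
  have K0: "0 \<le> K" unfolding K_def by simp
  have bnd: "(\<integral>\<^sup>+\<omega>. ennreal ((a k \<omega> + c)^2) \<partial>M) \<le> ennreal K" if "k \<ge> 1" for k
  proof -
    have "(\<integral>\<^sup>+\<omega>. ennreal ((a k \<omega> + c)^2) \<partial>M) \<le> (\<integral>\<^sup>+\<omega>. ennreal 2 * ennreal ((a k \<omega>)^2) + ennreal (2 * c^2) \<partial>M)"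
    proof (rule nn_integral_mono)
      fix \<omega>
      have "(a k \<omega> + c)^2 \<le> 2 * (a k \<omega>)^2 + 2 * c^2"
        using sum_squares_ge_zero[of "a k \<omega> - c" 0] by (simp add: power2_eq_square algebra_simps)
      then have "ennreal ((a k \<omega> + c)^2) \<le> ennreal (2 * (a k \<omega>)^2 + 2 * c^2)" by (rule ennreal_leI)
      also have "\<dots> = ennreal 2 * ennreal ((a k \<omega>)^2) + ennreal (2 * c^2)"
        by (simp add: ennreal_plus ennreal_mult)
      finally show "ennreal ((a k \<omega> + c)^2) \<le> ennreal 2 * ennreal ((a k \<omega>)^2) + ennreal (2 * c^2)" .
    qed
    also have "\<dots> = ennreal 2 * (\<integral>\<^sup>+\<omega>. ennreal ((a k \<omega>)^2) \<partial>M) + ennreal (2 * c^2)"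
      using ma[OF that] by (simp add: nn_integral_add nn_integral_cmult P.emeasure_space_1)
    also have "\<dots> \<le> ennreal 2 * ennreal (G^2) + ennreal (2 * c^2)"
      using Ea2[OF that] by (intro add_mono mult_left_mono) auto
    also have "\<dots> = ennreal K" unfolding K_def by (simp add: ennreal_plus ennreal_mult)
    finally show ?thesis .
  qed
  have a0: "\<forall>k\<ge>1. \<forall>\<omega>. 0 \<le> a k \<omega>" unfolding a_def by simp
  have A: "(\<integral>\<^sup>+\<omega>. ennreal ((Aseq (\<lambda>k. a k \<omega>) c k)^2) \<partial>M) \<le> ennreal K"
    and A0: "\<forall>\<omega>. 0 \<le> Aseq (\<lambda>k. a k \<omega>) c k"
    using Aseq_exp[OF M_prob _ c0 a0 K0 _ k] ma bnd by auto
  have "(\<integral>\<^sup>+\<omega>. ennreal ((norm (y k i \<omega>))^2) \<partial>M) \<le> (\<integral>\<^sup>+\<omega>. ennreal ((Aseq (\<lambda>k. a k \<omega>) c k)^2) \<partial>M)"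
  proof (rule nn_integral_mono)
    fix \<omega> assume "\<omega> \<in> space M"
    then have "norm (y k i \<omega>) \<le> Aseq (\<lambda>k. a k \<omega>) c k" by (rule ybd)
    then show "ennreal ((norm (y k i \<omega>))^2) \<le> ennreal ((Aseq (\<lambda>k. a k \<omega>) c k)^2)"
      by (intro ennreal_leI power_mono) auto
  qed
  also have "\<dots> \<le> ennreal K" by (rule A)
  also have "ennreal K \<le> ennreal \<psi>h"
  proof (rule ennreal_leI)
    have n1: "1 \<le> sqrt (real CARD('n))" by simp
    have "D \<le> C1" unfolding C1_def
    proof -
      have "1 * D \<le> (real k0 * sqrt (real CARD('n))) * D"
        using D0 k01 n1 by (intro mult_right_mono) (auto intro: order_trans[OF _ mult_mono[of 1 _ 1]])
      then show "D \<le> real k0 * sqrt (real CARD('n)) * D" by simp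
    qed
    then have cle: "c \<le> L * (D + 2 * C1)" unfolding c_def using L0 by (intro mult_left_mono) auto
    have c2: "c^2 \<le> L^2 * (D + 2 * C1)^2"
      using power_mono[OF cle c0] by (simp add: power_mult_distrib)
    have psi0: "0 \<le> \<psi>" unfolding \<psi>_def using G_pos L0 D0 C10 by (intro max.coboundedI2) simp
    have "K \<le> 4 * L * (D + 2 * C1) * \<psi> + 4 * G * \<psi> + 8 * G^2 + 8 * L^2 * (D + 2 * C1)^2"
    proof -
      have "0 \<le> 4 * L * (D + 2 * C1) * \<psi>" using psi0 L0 D0 C10 by simp
      moreover have "0 \<le> 4 * G * \<psi>" using psi0 G_pos by simp
      moreover have "0 \<le> G^2" by simp
      moreover have "2 * c^2 \<le> 8 * L^2 * (D + 2 * C1)^2" 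
      proof -
        have "0 \<le> L^2 * (D + 2 * C1)^2" by simp
        then show ?thesis using c2 by linarith
      qed
      ultimately show ?thesis unfolding K_def using c2 by linarith
    qed
    also have "\<dots> \<le> \<psi>h" unfolding \<psi>h_def by simp
    finally show "K \<le> \<psi>h" .
  qed
  finally show "(\<integral>\<^sup>+\<omega>. ennreal ((norm (y k i \<omega>))^2) \<partial>M) \<le> ennreal \<psi>h" .
qed
end
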